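(* Let $n=n_1+\dots+n_k=p+q$ with positive integers, let $G=U(n)$, let $L=U(n_1)\times\cdots\times U(n_k)$ and $H=U(p)\times U(q)$ be the natural block-diagonal subgroups of $G$, and let $G'=O(n)$. If $\min(p,q)\ge 3$ and $k\ge 4$, then $LG'H\subsetneq G$.
   Context: $LG'H=\{xyz:x\in L,y\in G',z\in H\}$. *)

theory Defs
  imports Complex_Main "Jordan_Normal_Form.Matrix"
begin

definition cadj :: "complex mat \<Rightarrow> complex mat" where
  "cadj A = transpose_mat (map_mat cnj A)"

definition unitary_group :: "nat \<Rightarrow> complex mat set" where
  "unitary_group n = {U \<in> carrier_mat n n. cadj U * U = 1\<^sub>m n \<and> U * cadj U = 1\<^sub>m n}"

definition orthogonal_group :: "nat \<Rightarrow> complex mat set" where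
  "orthogonal_group n = {map_mat complex_of_real R | R.
      R \<in> carrier_mat n n \<and> transpose_mat R * R = 1\<^sub>m n \<and> R * transpose_mat R = 1\<^sub>m n}"

definition block_unitary_group :: "nat list \<Rightarrow> complex mat set" where
  "block_unitary_group ns = {diag_block_mat Us | Us.
      length Us = length ns \<and> (\<forall>i < length ns. Us ! i \<in> unitary_group (ns ! i))}"

definition triple_prod :: "complex mat set \<Rightarrow> complex mat set \<Rightarrow> complex mat set \<Rightarrow> complex mat set" where
  "triple_prod A B C = {a * b * c | a b c. a \<in> A \<and> b \<in> B \<and> c \<in> C}"

end

theory Submission
  imports Defs
begin


definition Dm :: "nat \<Rightarrow> nat set \<Rightarrow> complex mat" where
  "Dm n X = mat n n (\<lambda>(i,j). if i = j \<and> i \<in> X then 1 else 0)"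

definition tr :: "complex mat \<Rightarrow> complex" where
  "tr A = (\<Sum>i<dim_row A. A $$ (i,i))"

lemma Dm_carrier[simp]: "Dm n X \<in> carrier_mat n n" and Dm_dim[simp]: "dim_row (Dm n X) = n" "dim_col (Dm n X) = n"
  by (auto simp: Dm_def)

lemma Dm_mult_left:
  assumes "A \<in> carrier_mat n m" "i < n" "j < m"
  shows "(Dm n X * A) $$ (i,j) = (if i \<in> X then A $$ (i,j) else 0)"
proof -
  have "(Dm n X * A) $$ (i,j) = (\<Sum>k\<in>{0..<n}. (if i = k \<and> i \<in> X then 1 else 0) * A $$ (k,j))"
    using assms by (simp add: scalar_prod_def Dm_def)
  also have "\<dots> = (\<Sum>k\<in>{0..<n}. if k = i then (if i \<in> X then A $$ (i,j) else 0) else 0)"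
    by (rule sum.cong) auto
  also have "\<dots> = (if i \<in> X then A $$ (i,j) else 0)" using assms by simp
  finally show ?thesis .
qed

lemma Dm_mult_right:
  assumes "A \<in> carrier_mat m n" "i < m" "j < n"
  shows "(A * Dm n X) $$ (i,j) = (if j \<in> X then A $$ (i,j) else 0)"
proof -
  have "(A * Dm n X) $$ (i,j) = (\<Sum>k\<in>{0..<n}. A $$ (i,k) * (if k = j \<and> k \<in> X then 1 else 0))"
    using assms by (simp add: scalar_prod_def Dm_def)
  also have "\<dots> = (\<Sum>k\<in>{0..<n}. if k = j then (if j \<in> X then A $$ (i,j) else 0) else 0)"
    by (rule sum.cong) auto
  also have "\<dots> = (if j \<in> X then A $$ (i,j) else 0)" using assms by simp
  finally show ?thesis .
qed

lemma tr_comm: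
  assumes "A \<in> carrier_mat n m" "B \<in> carrier_mat m n"
  shows "tr (A * B) = tr (B * A)"
proof -
  have "tr (A * B) = (\<Sum>i<n. \<Sum>k<m. A $$ (i,k) * B $$ (k,i))"
    using assms by (simp add: tr_def scalar_prod_def atLeast0LessThan)
  also have "\<dots> = (\<Sum>k<m. \<Sum>i<n. B $$ (k,i) * A $$ (i,k))"
    by (subst sum.swap) (simp add: mult.commute)
  also have "\<dots> = tr (B * A)"
    using assms by (simp add: tr_def scalar_prod_def atLeast0LessThan)
  finally show ?thesis .
qed


lemma cadj_carrier[simp]: "A \<in> carrier_mat n m \<Longrightarrow> cadj A \<in> carrier_mat m n"
  and cadj_dim[simp]: "dim_row (cadj A) = dim_col A" "dim_col (cadj A) = dim_row A"
  by (auto simp: cadj_def)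

lemma cadj_index[simp]: "i < dim_col A \<Longrightarrow> j < dim_row A \<Longrightarrow> cadj A $$ (i,j) = cnj (A $$ (j,i))"
  by (simp add: cadj_def)

lemma cadj_mult:
  assumes "A \<in> carrier_mat n m" "B \<in> carrier_mat m k"
  shows "cadj (A * B) = cadj B * cadj A"
proof (rule eq_matI)
  fix i j assume "i < dim_row (cadj B * cadj A)" "j < dim_col (cadj B * cadj A)"
  then show "cadj (A * B) $$ (i, j) = (cadj B * cadj A) $$ (i, j)"
    using assms by (simp add: scalar_prod_def mult.commute)
qed (use assms in auto)

lemma cadj_one[simp]: "cadj (1\<^sub>m n) = 1\<^sub>m n"
  by (rule eq_matI) auto

declare assoc_mult_mat[simp del]

lemma assoc4:
  assumes "A \<in> carrier_mat n n" "B \<in> carrier_mat n n" "C \<in> carrier_mat n n" "D \<in> carrier_mat n n"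
  shows "(A * B) * (C * D) = A * ((B * C) * D)"
proof -
  have e: "B * (C * D) = (B * C) * D" using assms by (simp add: assoc_mult_mat[of B n n C n D n])
  have "(A * B) * (C * D) = A * (B * (C * D))" using assms by (simp add: assoc_mult_mat[of A n n B n "C * D" n])
  then show ?thesis by (simp only: e)
qed

lemma unitary_mult:
  assumes "A \<in> unitary_group n" "B \<in> unitary_group n"
  shows "A * B \<in> unitary_group n"
proof -
  have A: "A \<in> carrier_mat n n" "cadj A * A = 1\<^sub>m n" "A * cadj A = 1\<^sub>m n"
    and B: "B \<in> carrier_mat n n" "cadj B * B = 1\<^sub>m n" "B * cadj B = 1\<^sub>m n"
    using assms by (auto simp: unitary_group_def)
  have cA: "cadj A \<in> carrier_mat n n" and cB: "cadj B \<in> carrier_mat n n" using A B by auto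
  have "cadj (A * B) * (A * B) = (cadj B * cadj A) * (A * B)"
    using A B by (simp add: cadj_mult)
  also have "\<dots> = cadj B * ((cadj A * A) * B)"
    by (rule assoc4[OF cB cA A(1) B(1)])
  finally have 1: "cadj (A * B) * (A * B) = 1\<^sub>m n" using A B cB by simp
  have "(A * B) * cadj (A * B) = (A * B) * (cadj B * cadj A)"
    using A B by (simp add: cadj_mult)
  also have "\<dots> = A * ((B * cadj B) * cadj A)"
    by (rule assoc4[OF A(1) B(1) cB cA])
  finally have 2: "(A * B) * cadj (A * B) = 1\<^sub>m n" using A B cA by simp
  show ?thesis using 1 2 A B by (auto simp: unitary_group_def)
qed


lemma cadj_zero[simp]: "cadj (0\<^sub>m a b) = 0\<^sub>m b a"
  by (rule eq_matI) auto

lemma cadj_four_block: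
  assumes "A \<in> carrier_mat r1 c1" "B \<in> carrier_mat r1 c2" "C \<in> carrier_mat r2 c1" "D \<in> carrier_mat r2 c2"
  shows "cadj (four_block_mat A B C D) = four_block_mat (cadj A) (cadj C) (cadj B) (cadj D)"
  by (rule eq_matI) (use assms in auto)

lemma unitary_group_0: "0\<^sub>m 0 0 \<in> unitary_group 0"
  unfolding unitary_group_def by (auto intro!: eq_matI)

lemma four_block_unitary:
  assumes A: "A \<in> unitary_group n1" and B: "B \<in> unitary_group n2"
  shows "four_block_mat A (0\<^sub>m n1 n2) (0\<^sub>m n2 n1) B \<in> unitary_group (n1 + n2)"
proof -
  have A1: "A \<in> carrier_mat n1 n1" "cadj A * A = 1\<^sub>m n1" "A * cadj A = 1\<^sub>m n1"
    and B1: "B \<in> carrier_mat n2 n2" "cadj B * B = 1\<^sub>m n2" "B * cadj B = 1\<^sub>m n2"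
    using assms by (auto simp: unitary_group_def)
  have cA: "cadj A \<in> carrier_mat n1 n1" and cB: "cadj B \<in> carrier_mat n2 n2" using A1 B1 by auto
  have c: "cadj (four_block_mat A (0\<^sub>m n1 n2) (0\<^sub>m n2 n1) B) = four_block_mat (cadj A) (0\<^sub>m n1 n2) (0\<^sub>m n2 n1) (cadj B)"
    using A1 B1 by (simp add: cadj_four_block[of A n1 n1 _ n2 _ n2])
  have 1: "cadj (four_block_mat A (0\<^sub>m n1 n2) (0\<^sub>m n2 n1) B) * four_block_mat A (0\<^sub>m n1 n2) (0\<^sub>m n2 n1) B = 1\<^sub>m (n1 + n2)"
    unfolding c
    by (subst mult_four_block_mat[of _ n1 n1 _ n2 _ n2 _ _ n1 _ n2]) (use A1 B1 cA cB in auto)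
  have 2: "four_block_mat A (0\<^sub>m n1 n2) (0\<^sub>m n2 n1) B * cadj (four_block_mat A (0\<^sub>m n1 n2) (0\<^sub>m n2 n1) B) = 1\<^sub>m (n1 + n2)"
    unfolding c
    by (subst mult_four_block_mat[of _ n1 n1 _ n2 _ n2 _ _ n1 _ n2]) (use A1 B1 cA cB in auto)
  show ?thesis using 1 2 A1 B1 by (auto simp: unitary_group_def)
qed

lemma diag_block_unitary:
  "(\<forall>A\<in>set As. A \<in> unitary_group (dim_row A)) \<Longrightarrow> diag_block_mat As \<in> unitary_group (sum_list (map dim_row As))"
proof (induction As)
  case Nil
  then show ?case using unitary_group_0 by simp
next
  case (Cons A As)
  then have A: "A \<in> unitary_group (dim_row A)" and B: "diag_block_mat As \<in> unitary_group (sum_list (map dim_row As))"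
    by auto
  have dA: "dim_col A = dim_row A" using A by (auto simp: unitary_group_def)
  have dB: "dim_row (diag_block_mat As) = sum_list (map dim_row As)" "dim_col (diag_block_mat As) = sum_list (map dim_row As)"
    using B by (auto simp: unitary_group_def)
  show ?case using four_block_unitary[OF A B] by (simp add: Let_def dA dB)
qed

lemma block_unitary_subset: "block_unitary_group ns \<subseteq> unitary_group (sum_list ns)"
proof
  fix M assume "M \<in> block_unitary_group ns"
  then obtain Us where M: "M = diag_block_mat Us" and len: "length Us = length ns"
    and U: "\<forall>i<length ns. Us ! i \<in> unitary_group (ns ! i)"
    by (auto simp: block_unitary_group_def)
  have dims: "map dim_row Us = ns"
    by (rule nth_equalityI) (use len U in \<open>auto simp: unitary_group_def\<close>)
  have "\<forall>A\<in>set Us. A \<in> unitary_group (dim_row A)"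
  proof
    fix A assume "A \<in> set Us"
    then obtain i where i: "i < length Us" "A = Us ! i" by (auto simp: in_set_conv_nth)
    then have A: "A \<in> unitary_group (ns ! i)" using U len by auto
    then have "dim_row A = ns ! i" by (auto simp: unitary_group_def)
    then show "A \<in> unitary_group (dim_row A)" using A by simp
  qed
  from diag_block_unitary[OF this] show "M \<in> unitary_group (sum_list ns)" using M dims by simp
qed

lemma orth_subset: "orthogonal_group n \<subseteq> unitary_group n"
proof
  fix M assume "M \<in> orthogonal_group n"
  then obtain R where M: "M = map_mat complex_of_real R" and R: "R \<in> carrier_mat n n"
    "transpose_mat R * R = 1\<^sub>m n" "R * transpose_mat R = 1\<^sub>m n"
    by (auto simp: orthogonal_group_def)
  have 1: "cadj M * M = 1\<^sub>m n"
  proof (rule eq_matI)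
    fix i j assume ij: "i < dim_row (1\<^sub>m n)" "j < dim_col (1\<^sub>m n)"
    have "(transpose_mat R * R) $$ (i,j) = 1\<^sub>m n $$ (i,j)" using R by simp
    then have e: "(\<Sum>k<n. R $$ (k,i) * R $$ (k,j)) = (if i = j then 1 else 0)"
      using ij R(1) by (simp add: scalar_prod_def atLeast0LessThan)
    have "(cadj M * M) $$ (i,j) = (\<Sum>k<n. complex_of_real (R $$ (k,i) * R $$ (k,j)))"
      using ij R M by (simp add: scalar_prod_def atLeast0LessThan)
    also have "\<dots> = complex_of_real (\<Sum>k<n. R $$ (k,i) * R $$ (k,j))" by simp
    also have "\<dots> = complex_of_real (if i = j then 1 else 0)" by (simp only: e)
    finally show "(cadj M * M) $$ (i,j) = 1\<^sub>m n $$ (i,j)" using ij by simp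
  qed (use M R in auto)
  have 2: "M * cadj M = 1\<^sub>m n"
  proof (rule eq_matI)
    fix i j assume ij: "i < dim_row (1\<^sub>m n)" "j < dim_col (1\<^sub>m n)"
    have "(R * transpose_mat R) $$ (i,j) = 1\<^sub>m n $$ (i,j)" using R by simp
    then have e: "(\<Sum>k<n. R $$ (i,k) * R $$ (j,k)) = (if i = j then 1 else 0)"
      using ij R(1) by (simp add: scalar_prod_def atLeast0LessThan)
    have "(M * cadj M) $$ (i,j) = (\<Sum>k<n. complex_of_real (R $$ (i,k) * R $$ (j,k)))"
      using ij R M by (simp add: scalar_prod_def atLeast0LessThan)
    also have "\<dots> = complex_of_real (\<Sum>k<n. R $$ (i,k) * R $$ (j,k))" by simp
    also have "\<dots> = complex_of_real (if i = j then 1 else 0)" by (simp only: e)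
    finally show "(M * cadj M) $$ (i,j) = 1\<^sub>m n $$ (i,j)" using ij by simp
  qed (use M R in auto)
  show "M \<in> unitary_group n" using 1 2 M R by (auto simp: unitary_group_def)
qed


definition off :: "nat list \<Rightarrow> nat \<Rightarrow> nat" where "off ns i = sum_list (take i ns)"

lemma off_Cons_Suc[simp]: "off (a # ns) (Suc i) = a + off ns i" by (simp add: off_def)
lemma off_0[simp]: "off ns 0 = 0" by (simp add: off_def)

lemma off_Suc: "i < length ns \<Longrightarrow> off ns (Suc i) = off ns i + ns ! i"
  by (simp add: off_def take_Suc_conv_app_nth)

lemma off_le: "off ns i \<le> sum_list ns"
proof -
  have "sum_list ns = sum_list (take i ns) + sum_list (drop i ns)"
    by (metis append_take_drop_id sum_list_append)
  then show ?thesis by (simp add: off_def)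
qed

lemma off_bound: "i < length ns \<Longrightarrow> off ns i + ns ! i \<le> sum_list ns"
  using off_Suc[of i ns] off_le[of ns "Suc i"] by simp

lemma diag_block_zero:
  assumes "length Us = length ns" "\<forall>i<length ns. Us ! i \<in> carrier_mat (ns ! i) (ns ! i)"
    "i < length ns" "off ns i \<le> x" "x < off ns i + ns ! i" "y < sum_list ns"
    "\<not> (off ns i \<le> y \<and> y < off ns i + ns ! i)"
  shows "diag_block_mat Us $$ (x,y) = 0 \<and> diag_block_mat Us $$ (y,x) = 0"
  using assms
proof (induction Us arbitrary: ns i x y)
  case Nil
  then show ?case by simp
next
  case (Cons A As)
  from Cons.prems(1) obtain n0 ns' where ns: "ns = n0 # ns'" by (cases ns) auto
  have len: "length As = length ns'" using Cons.prems(1) ns by simp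
  have cAs: "\<forall>i<length ns'. As ! i \<in> carrier_mat (ns' ! i) (ns' ! i)"
    using Cons.prems(2) ns by auto
  have A: "A \<in> carrier_mat n0 n0" using Cons.prems(2) ns by force
  have dims: "map dim_row As = ns'" "map dim_col As = ns'"
    by (rule nth_equalityI; use len cAs in auto)+
  have dB: "dim_row (diag_block_mat As) = sum_list ns'" "dim_col (diag_block_mat As) = sum_list ns'"
    using dims by (simp_all add: dim_diag_block_mat)
  have eq: "diag_block_mat (A # As) = four_block_mat A (0\<^sub>m n0 (sum_list ns')) (0\<^sub>m (sum_list ns') n0) (diag_block_mat As)"
    using A dB by (simp add: Let_def)
  have bnd: "x < n0 + sum_list ns'" "y < n0 + sum_list ns'"
  proof -
    have "off ns i + ns ! i \<le> sum_list ns"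
      using Cons.prems(3) by (rule off_bound)
    then show "x < n0 + sum_list ns'" "y < n0 + sum_list ns'" using Cons.prems ns by auto
  qed
  show ?case
  proof (cases i)
    case 0
    then have "x < n0" "n0 \<le> y" using Cons.prems ns by auto
    then show ?thesis unfolding eq using A dB bnd by simp
  next
    case (Suc i')
    have xx: "n0 \<le> x" "off ns' i' \<le> x - n0" "x - n0 < off ns' i' + ns' ! i'"
      using Cons.prems ns Suc by auto
    show ?thesis
    proof (cases "y < n0")
      case True
      then show ?thesis unfolding eq using A dB bnd xx by simp
    next
      case False
      have IH: "diag_block_mat As $$ (x - n0, y - n0) = 0 \<and> diag_block_mat As $$ (y - n0, x - n0) = 0"
        by (rule Cons.IH[OF len cAs, of i']) (use Cons.prems ns Suc False bnd xx in auto)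
      then show ?thesis unfolding eq using A dB bnd xx False by simp
    qed
  qed
qed


definition blk :: "nat list \<Rightarrow> nat \<Rightarrow> nat set" where
  "blk ns i = {off ns i..<off ns i + ns ! i}"

lemma block_commute:
  assumes "l \<in> block_unitary_group ns" "i < length ns"
  shows "Dm (sum_list ns) (blk ns i) * l = l * Dm (sum_list ns) (blk ns i)"
proof -
  let ?n = "sum_list ns"
  obtain Us where l: "l = diag_block_mat Us" and len: "length Us = length ns"
    and U: "\<forall>i<length ns. Us ! i \<in> unitary_group (ns ! i)"
    using assms(1) by (auto simp: block_unitary_group_def)
  have cU: "\<forall>i<length ns. Us ! i \<in> carrier_mat (ns ! i) (ns ! i)" using U by (auto simp: unitary_group_def)
  have lc: "l \<in> carrier_mat ?n ?n" using block_unitary_subset assms(1) by (auto simp: unitary_group_def)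
  have z: "l $$ (x,y) = 0" if "x < ?n" "y < ?n" "(x \<in> blk ns i) \<noteq> (y \<in> blk ns i)" for x y
    using diag_block_zero[OF len cU assms(2)] that unfolding l blk_def by (cases "x \<in> blk ns i") auto
  show ?thesis
  proof (rule eq_matI)
    fix x y assume xy: "x < dim_row (l * Dm ?n (blk ns i))" "y < dim_col (l * Dm ?n (blk ns i))"
    then have xy': "x < ?n" "y < ?n" using lc by auto
    show "(Dm ?n (blk ns i) * l) $$ (x, y) = (l * Dm ?n (blk ns i)) $$ (x, y)"
      using Dm_mult_left[OF lc xy'] Dm_mult_right[OF lc xy'] z[OF xy'] by auto
  qed (use lc in auto)
qed

definition realm :: "complex mat \<Rightarrow> bool" where
  "realm A = (\<forall>i<dim_row A. \<forall>j<dim_col A. Im (A $$ (i,j)) = 0)"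

lemma realm_mult: "realm A \<Longrightarrow> realm B \<Longrightarrow> dim_col A = dim_row B \<Longrightarrow> realm (A * B)"
  unfolding realm_def by (auto simp: scalar_prod_def Im_sum intro!: sum.neutral)

lemma realm_Dm: "realm (Dm n X)" unfolding realm_def Dm_def by auto

lemma realm_tr: "realm A \<Longrightarrow> dim_row A = dim_col A \<Longrightarrow> Im (tr A) = 0"
  unfolding realm_def tr_def by (auto simp: Im_sum intro!: sum.neutral)

lemma realm_orth:
  assumes "M \<in> orthogonal_group n"
  shows "realm M" "realm (cadj M)"
  using assms unfolding realm_def orthogonal_group_def by (auto simp: cadj_def)


lemma mult_carrier_sq[simp]: "A \<in> carrier_mat n n \<Longrightarrow> B \<in> carrier_mat n n \<Longrightarrow> A * B \<in> carrier_mat n n"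
  by (rule mult_carrier_mat)

lemma assoc_n: "A \<in> carrier_mat n n \<Longrightarrow> B \<in> carrier_mat n n \<Longrightarrow> C \<in> carrier_mat n n \<Longrightarrow> (A * B) * C = A * (B * C)"
  by (rule assoc_mult_mat)

lemma part1:
  assumes sn: "sum_list ns = n" and pq: "p + q = n"
    and i: "i1 < length ns" "i2 < length ns" "i3 < length ns"
    and g: "g \<in> triple_prod (block_unitary_group ns) (orthogonal_group n) (block_unitary_group [p, q])"
  shows "Im (tr (Dm n (blk ns i1) * (g * Dm n {0..<p} * cadj g) * Dm n (blk ns i2) * (g * Dm n {0..<p} * cadj g)
     * Dm n (blk ns i3) * (g * Dm n {0..<p} * cadj g))) = 0"
proof -
  obtain l M h where gl: "g = l * M * h" and l: "l \<in> block_unitary_group ns" and M: "M \<in> orthogonal_group n"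
    and h: "h \<in> block_unitary_group [p, q]"
    using g by (auto simp: triple_prod_def)
  have lu: "l \<in> unitary_group n" using l block_unitary_subset sn by auto
  have hu: "h \<in> unitary_group n" using h block_unitary_subset[of "[p,q]"] pq by auto
  have Mu: "M \<in> unitary_group n" using M orth_subset by auto
  have lc: "l \<in> carrier_mat n n" "cadj l \<in> carrier_mat n n" and l1: "cadj l * l = 1\<^sub>m n" "l * cadj l = 1\<^sub>m n"
    using lu by (auto simp: unitary_group_def)
  have hc: "h \<in> carrier_mat n n" "cadj h \<in> carrier_mat n n" and h1: "cadj h * h = 1\<^sub>m n" "h * cadj h = 1\<^sub>m n"
    using hu by (auto simp: unitary_group_def)
  have Mc: "M \<in> carrier_mat n n" "cadj M \<in> carrier_mat n n"
    using Mu by (auto simp: unitary_group_def)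
  define E where "E = Dm n {0..<p}"
  define D1 where "D1 = Dm n (blk ns i1)"
  define D2 where "D2 = Dm n (blk ns i2)"
  define D3 where "D3 = Dm n (blk ns i3)"
  have Dc: "E \<in> carrier_mat n n" "D1 \<in> carrier_mat n n" "D2 \<in> carrier_mat n n" "D3 \<in> carrier_mat n n"
    by (auto simp: E_def D1_def D2_def D3_def)
  have Eh: "E * h = h * E"
    using block_commute[OF h, of 0] pq by (simp add: E_def blk_def)
  have Dl: "D1 * l = l * D1" "D2 * l = l * D2" "D3 * l = l * D3"
    using block_commute[OF l] i sn by (auto simp: D1_def D2_def D3_def)
  note cs = lc hc Mc Dc
  have r1: "cadj l * (l * Z) = Z" if "Z \<in> carrier_mat n n" for Z
  proof -
    have "cadj l * (l * Z) = (cadj l * l) * Z" by (rule assoc_n[symmetric, OF lc(2) lc(1) that])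
    then show ?thesis using that l1 by simp
  qed
  have r3: "D * (l * Z) = l * (D * Z)" if "Z \<in> carrier_mat n n" "D \<in> {D1, D2, D3}" for D Z
    using that cs Dl by (auto simp: assoc_n[symmetric])
  have r4: "h * (E * (cadj h * Z)) = E * Z" if "Z \<in> carrier_mat n n" for Z
  proof -
    have "h * (E * (cadj h * Z)) = (h * E) * (cadj h * Z)" using that cs by (simp del: cadj_carrier add: assoc_n)
    also have "\<dots> = (E * h) * (cadj h * Z)" using Eh by simp
    also have "\<dots> = E * ((h * cadj h) * Z)" by (rule assoc4[OF Dc(1) hc(1) hc(2) that])
    finally show ?thesis using that h1 by simp
  qed
  have cg: "cadj g = cadj h * (cadj M * cadj l)"
    unfolding gl using cs by (simp del: cadj_carrier add: cadj_mult[of _ n n _ n] assoc_n)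
  define W where "W = D1 * (M * (E * (cadj M * (D2 * (M * (E * (cadj M * (D3 * (M * (E * cadj M))))))))))"
  have Wc: "W \<in> carrier_mat n n" unfolding W_def using cs by (simp del: cadj_carrier)
  have "D1 * (g * E * cadj g) * D2 * (g * E * cadj g) * D3 * (g * E * cadj g) = l * (W * cadj l)"
    unfolding cg unfolding gl W_def using cs by (simp del: cadj_carrier add: assoc_n r1 r3 r4)
  then have "tr (D1 * (g * E * cadj g) * D2 * (g * E * cadj g) * D3 * (g * E * cadj g)) = tr ((W * cadj l) * l)"
    using tr_comm[of l n n "W * cadj l"] cs Wc by simp
  also have "(W * cadj l) * l = W" using cs Wc l1 by (simp del: cadj_carrier add: assoc_n)
  finally have eq: "tr (D1 * (g * E * cadj g) * D2 * (g * E * cadj g) * D3 * (g * E * cadj g)) = tr W" .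
  have "realm W" unfolding W_def using cs realm_orth[OF M]
    by (simp add: realm_mult realm_Dm E_def D1_def D2_def D3_def)
  then have "Im (tr W) = 0" using Wc by (intro realm_tr) auto
  then show ?thesis using eq by (simp add: E_def D1_def D2_def D3_def)
qed


lemma mult_entry:
  assumes "A \<in> carrier_mat n m" "B \<in> carrier_mat m k" "i < n" "j < k"
  shows "(A * B) $$ (i,j) = (\<Sum>l<m. A $$ (i,l) * B $$ (l,j))"
  using assms by (simp add: scalar_prod_def atLeast0LessThan)

lemma sum_single:
  assumes "finite A" "a \<in> A" "\<And>z. z \<in> A \<Longrightarrow> z \<noteq> a \<Longrightarrow> F z = 0"
  shows "sum F A = F a"
proof -
  have "sum F A = F a + sum F (A - {a})" using assms by (simp add: sum.remove)
  also have "sum F (A - {a}) = 0" using assms by (intro sum.neutral) auto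
  finally show ?thesis by simp
qed

lemma sum_reindex_support:
  assumes inj: "inj_on s {..<m::nat}" and sn: "\<And>i. i < m \<Longrightarrow> s i < (n::nat)"
    and z: "\<And>z. z < n \<Longrightarrow> z \<notin> s ` {..<m} \<Longrightarrow> F z = 0"
  shows "(\<Sum>z<n. F z) = (\<Sum>k<m. F (s k))"
proof -
  have "(\<Sum>z<n. F z) = (\<Sum>z\<in>s ` {..<m}. F z)"
    by (rule sum.mono_neutral_right[OF finite_lessThan]) (use sn z in auto)
  also have "\<dots> = (\<Sum>k<m. F (s k))" by (rule sum.reindex_cong[OF inj refl]) simp
  finally show ?thesis .
qed

locale constr =
  fixes n m :: nat and s :: "nat \<Rightarrow> nat" and u :: "complex mat"
  assumes inj: "inj_on s {..<m}" and sn: "\<And>i. i < m \<Longrightarrow> s i < n"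
    and uu: "u \<in> unitary_group m"
begin

definition S where "S = s ` {..<m}"
definition t where "t = the_inv_into {..<m} s"
definition G where "G = mat n n (\<lambda>(x,y). if x \<in> S \<and> y \<in> S then u $$ (t x, t y) else if x = y then 1 else 0)"

lemma t_s[simp]: "i < m \<Longrightarrow> t (s i) = i"
  unfolding t_def using inj by (simp add: the_inv_into_f_f)

lemma s_inS[simp]: "i < m \<Longrightarrow> s i \<in> S" unfolding S_def by auto

lemma s_eq[simp]: "i < m \<Longrightarrow> j < m \<Longrightarrow> (s i = s j) = (i = j)"
  using inj by (auto simp: inj_on_def)

lemma G_carrier[simp]: "G \<in> carrier_mat n n" unfolding G_def by auto
lemma G_dim[simp]: "dim_row G = n" "dim_col G = n" unfolding G_def by auto

lemma G_S: "i < m \<Longrightarrow> j < m \<Longrightarrow> G $$ (s i, s j) = u $$ (i,j)"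
  unfolding G_def using sn by auto

lemma G_N: "x < n \<Longrightarrow> y < n \<Longrightarrow> x \<notin> S \<or> y \<notin> S \<Longrightarrow> G $$ (x,y) = (if x = y then 1 else 0)"
  unfolding G_def by auto

lemma uc: "u \<in> carrier_mat m m" "cadj u * u = 1\<^sub>m m" "u * cadj u = 1\<^sub>m m"
  using uu by (auto simp: unitary_group_def)

lemma Sn: "x \<in> S \<Longrightarrow> x < n" unfolding S_def using sn by auto

lemma G_unitary: "G \<in> unitary_group n"
proof -
  have 1: "cadj G * G = 1\<^sub>m n"
  proof (rule eq_matI)
    fix x y assume "x < dim_row (1\<^sub>m n)" "y < dim_col (1\<^sub>m n)"
    then have xy: "x < n" "y < n" by auto
    have e: "(cadj G * G) $$ (x,y) = (\<Sum>z<n. cnj (G $$ (z,x)) * G $$ (z,y))"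
      using xy by (subst mult_entry[of _ n n _ n]) (auto intro!: sum.cong)
    show "(cadj G * G) $$ (x,y) = 1\<^sub>m n $$ (x,y)"
    proof (cases "x \<in> S")
      case xS: True
      show ?thesis
      proof (cases "y \<in> S")
        case True
        obtain i j where ij: "i < m" "j < m" "x = s i" "y = s j" using xS True unfolding S_def by auto
        have "(\<Sum>z<n. cnj (G $$ (z,x)) * G $$ (z,y)) = (\<Sum>k<m. cnj (G $$ (s k,x)) * G $$ (s k,y))"
          by (rule sum_reindex_support[OF inj sn]) (use xy xS G_N in \<open>auto simp: S_def\<close>)
        also have "\<dots> = (\<Sum>k<m. cnj (u $$ (k,i)) * u $$ (k,j))" using ij by (simp add: G_S)
        also have "\<dots> = (cadj u * u) $$ (i,j)" using ij uc(1) by (subst mult_entry[of _ m m _ m]) (auto intro!: sum.cong)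
        also have "\<dots> = (if i = j then 1 else 0)" using ij uc by simp
        finally show ?thesis using e ij xy by simp
      next
        case False
        have "(\<Sum>z<n. cnj (G $$ (z,x)) * G $$ (z,y)) = cnj (G $$ (y,x)) * G $$ (y,y)"
          by (rule sum_single) (use xy False G_N in auto)
        then show ?thesis using e xy False xS G_N by auto
      qed
    next
      case False
      have "(\<Sum>z<n. cnj (G $$ (z,x)) * G $$ (z,y)) = cnj (G $$ (x,x)) * G $$ (x,y)"
        by (rule sum_single) (use xy False G_N in auto)
      then show ?thesis using e xy False G_N by auto
    qed
  qed auto
  have 2: "G * cadj G = 1\<^sub>m n"
  proof (rule eq_matI)
    fix x y assume "x < dim_row (1\<^sub>m n)" "y < dim_col (1\<^sub>m n)"
    then have xy: "x < n" "y < n" by auto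
    have e: "(G * cadj G) $$ (x,y) = (\<Sum>z<n. G $$ (x,z) * cnj (G $$ (y,z)))"
      using xy by (subst mult_entry[of _ n n _ n]) (auto intro!: sum.cong)
    show "(G * cadj G) $$ (x,y) = 1\<^sub>m n $$ (x,y)"
    proof (cases "x \<in> S")
      case xS: True
      show ?thesis
      proof (cases "y \<in> S")
        case True
        obtain i j where ij: "i < m" "j < m" "x = s i" "y = s j" using xS True unfolding S_def by auto
        have "(\<Sum>z<n. G $$ (x,z) * cnj (G $$ (y,z))) = (\<Sum>k<m. G $$ (x, s k) * cnj (G $$ (y, s k)))"
          by (rule sum_reindex_support[OF inj sn]) (use xy xS G_N in \<open>auto simp: S_def\<close>)
        also have "\<dots> = (\<Sum>k<m. u $$ (i,k) * cnj (u $$ (j,k)))" using ij by (simp add: G_S)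
        also have "\<dots> = (u * cadj u) $$ (i,j)" using ij uc(1) by (subst mult_entry[of _ m m _ m]) (auto intro!: sum.cong)
        also have "\<dots> = (if i = j then 1 else 0)" using ij uc by simp
        finally show ?thesis using e ij xy by simp
      next
        case False
        have "(\<Sum>z<n. G $$ (x,z) * cnj (G $$ (y,z))) = G $$ (x,y) * cnj (G $$ (y,y))"
          by (rule sum_single) (use xy False G_N in auto)
        then show ?thesis using e xy False xS G_N by auto
      qed
    next
      case False
      have "(\<Sum>z<n. G $$ (x,z) * cnj (G $$ (y,z))) = G $$ (x,x) * cnj (G $$ (y,x))"
        by (rule sum_single) (use xy False G_N in auto)
      then show ?thesis using e xy False G_N by auto
    qed
  qed auto
  show ?thesis using 1 2 by (auto simp: unitary_group_def)
qed


definition Q where "Q p = G * Dm n {0..<p} * cadj G"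
definition P where "P p a b = (\<Sum>k<m. u $$ (a,k) * (if s k < p then 1 else 0) * cnj (u $$ (b,k)))"

lemma Q_carrier[simp]: "Q p \<in> carrier_mat n n" unfolding Q_def
  by (intro mult_carrier_mat[of _ n n] cadj_carrier G_carrier Dm_carrier)
lemma Q_dim[simp]: "dim_row (Q p) = n" "dim_col (Q p) = n" using carrier_matD[OF Q_carrier[of p]] by auto

lemma Q_entry:
  assumes "x < n" "y < n"
  shows "Q p $$ (x,y) = (\<Sum>z<n. G $$ (x,z) * (if z < p then 1 else 0) * cnj (G $$ (y,z)))"
proof -
  have "Q p $$ (x,y) = (\<Sum>z<n. (G * Dm n {0..<p}) $$ (x,z) * cadj G $$ (z,y))"
    unfolding Q_def by (rule mult_entry[of _ n n _ n]) (use assms in auto)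
  also have "\<dots> = (\<Sum>z<n. G $$ (x,z) * (if z < p then 1 else 0) * cnj (G $$ (y,z)))"
    using assms by (intro sum.cong) (auto simp del: index_mult_mat(1) simp add: Dm_mult_right[of G n n])
  finally show ?thesis .
qed

lemma Q_S:
  assumes "a < m" "b < m"
  shows "Q p $$ (s a, s b) = P p a b"
proof -
  have "Q p $$ (s a, s b) = (\<Sum>z<n. G $$ (s a,z) * (if z < p then 1 else 0) * cnj (G $$ (s b,z)))"
    using assms sn by (simp add: Q_entry)
  also have "\<dots> = (\<Sum>k<m. G $$ (s a, s k) * (if s k < p then 1 else 0) * cnj (G $$ (s b, s k)))"
    by (rule sum_reindex_support[OF inj sn]) (use assms sn G_N in \<open>auto simp: S_def\<close>)
  also have "\<dots> = P p a b" using assms by (simp add: G_S P_def)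
  finally show ?thesis .
qed

lemma Q_zero:
  assumes "x < n" "y < n" "x \<noteq> y" "x \<notin> S \<or> y \<notin> S"
  shows "Q p $$ (x,y) = 0"
proof (cases "x \<in> S")
  case False
  have "Q p $$ (x,y) = (\<Sum>z<n. G $$ (x,z) * (if z < p then 1 else 0) * cnj (G $$ (y,z)))"
    using assms by (simp add: Q_entry)
  also have "\<dots> = G $$ (x,x) * (if x < p then 1 else 0) * cnj (G $$ (y,x))"
    by (rule sum_single) (use assms False G_N in auto)
  also have "\<dots> = 0" using assms False G_N by auto
  finally show ?thesis .
next
  case True
  then have yS: "y \<notin> S" using assms by auto
  have "Q p $$ (x,y) = (\<Sum>z<n. G $$ (x,z) * (if z < p then 1 else 0) * cnj (G $$ (y,z)))"
    using assms by (simp add: Q_entry)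
  also have "\<dots> = G $$ (x,y) * (if y < p then 1 else 0) * cnj (G $$ (y,y))"
    by (rule sum_single) (use assms yS G_N in auto)
  also have "\<dots> = 0" using assms yS G_N by auto
  finally show ?thesis .
qed

lemma trace_formula:
  assumes m3: "3 \<le> m"
    and disj: "X1 \<inter> X2 = {}" "X2 \<inter> X3 = {}" "X1 \<inter> X3 = {}"
    and cls: "\<And>i. i < m \<Longrightarrow> (s i \<in> X1 \<longleftrightarrow> i = 0) \<and> (s i \<in> X2 \<longleftrightarrow> i = 1) \<and> (s i \<in> X3 \<longleftrightarrow> i = 2)"
  shows "tr (Dm n X1 * Q p * Dm n X2 * Q p * Dm n X3 * Q p) = P p 0 1 * P p 1 2 * P p 2 0"
proof -
  let ?Q = "Q p"
  define A where "A x z = (\<Sum>y<n. (if y \<in> X2 \<and> x \<in> X1 then ?Q $$ (x,y) else 0) * ?Q $$ (y,z))" for x z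
  have notS: "x \<notin> S" if "x \<in> X" "x \<noteq> s j" "j < m" "\<And>i. i < m \<Longrightarrow> (s i \<in> X \<longleftrightarrow> i = j)" for x X j
  proof
    assume "x \<in> S"
    then obtain i where "i < m" "x = s i" unfolding S_def by auto
    then show False using that by auto
  qed
  have s0: "s 0 \<in> X1" "s 0 < n" and s1: "s 1 \<in> X2" "s 1 < n" and s2: "s 2 \<in> X3" "s 2 < n"
    using cls[of 0] cls[of 1] cls[of 2] sn m3 by auto
  have c1: "\<And>i. i < m \<Longrightarrow> (s i \<in> X1 \<longleftrightarrow> i = 0)" and c2: "\<And>i. i < m \<Longrightarrow> (s i \<in> X2 \<longleftrightarrow> i = 1)"
    and c3: "\<And>i. i < m \<Longrightarrow> (s i \<in> X3 \<longleftrightarrow> i = 2)" using cls by auto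
  have step1: "tr (Dm n X1 * ?Q * Dm n X2 * ?Q * Dm n X3 * ?Q) = (\<Sum>x<n. \<Sum>z<n. (if z \<in> X3 then A x z else 0) * ?Q $$ (z,x))"
  proof -
    have e1: "(Dm n X1 * ?Q * Dm n X2) $$ (x,y) = (if y \<in> X2 \<and> x \<in> X1 then ?Q $$ (x,y) else 0)" if "x < n" "y < n" for x y
      using that by (simp del: index_mult_mat(1) add: Dm_mult_right[of _ n n] Dm_mult_left[of _ n n])
    have e2: "(Dm n X1 * ?Q * Dm n X2 * ?Q * Dm n X3) $$ (x,z) = (if z \<in> X3 then A x z else 0)" if "x < n" "z < n" for x z
    proof -
      have "(Dm n X1 * ?Q * Dm n X2 * ?Q * Dm n X3) $$ (x,z) = (if z \<in> X3 then (Dm n X1 * ?Q * Dm n X2 * ?Q) $$ (x,z) else 0)"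
        using that by (simp del: index_mult_mat(1) add: Dm_mult_right[of _ n n])
      also have "(Dm n X1 * ?Q * Dm n X2 * ?Q) $$ (x,z) = A x z"
        unfolding A_def using that by (subst mult_entry[of _ n n _ n]) (auto simp del: index_mult_mat(1) simp: e1 intro!: sum.cong)
      finally show ?thesis .
    qed
    have e3: "(Dm n X1 * ?Q * Dm n X2 * ?Q * Dm n X3 * ?Q) $$ (x,x) = (\<Sum>z<n. (if z \<in> X3 then A x z else 0) * ?Q $$ (z,x))" if "x < n" for x
    proof -
      have "(Dm n X1 * ?Q * Dm n X2 * ?Q * Dm n X3 * ?Q) $$ (x,x) = (\<Sum>z<n. (Dm n X1 * ?Q * Dm n X2 * ?Q * Dm n X3) $$ (x,z) * ?Q $$ (z,x))"
        by (rule mult_entry[of _ n n _ n]) (use that in auto)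
      also have "\<dots> = (\<Sum>z<n. (if z \<in> X3 then A x z else 0) * ?Q $$ (z,x))"
        using that by (intro sum.cong) (auto simp del: index_mult_mat(1) simp: e2)
      finally show ?thesis .
    qed
    show ?thesis
      unfolding tr_def by (auto simp del: index_mult_mat(1) simp: e3 intro!: sum.cong)
  qed
  also have "\<dots> = (\<Sum>z<n. (if z \<in> X3 then A (s 0) z else 0) * ?Q $$ (z, s 0))"
  proof (rule sum_single)
    fix x assume x: "x \<in> {..<n}" "x \<noteq> s 0"
    have "A x z = 0" for z
    proof (cases "x \<in> X1")
      case True
      then have "x \<notin> S" using notS[of x X1 0] x c1 m3 by auto
      then show ?thesis unfolding A_def using x disj by (intro sum.neutral) (auto intro!: Q_zero)
    qed (auto simp: A_def)
    then show "(\<Sum>z<n. (if z \<in> X3 then A x z else 0) * ?Q $$ (z,x)) = 0" by (auto intro!: sum.neutral)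
  qed (use s0 in auto)
  also have "\<dots> = A (s 0) (s 2) * ?Q $$ (s 2, s 0)"
  proof (rule trans[OF sum_single[of _ "s 2"]])
    fix z assume z: "z \<in> {..<n}" "z \<noteq> s 2"
    show "(if z \<in> X3 then A (s 0) z else 0) * ?Q $$ (z, s 0) = 0"
    proof (cases "z \<in> X3")
      case True
      then have "z \<notin> S" using notS[of z X3 2] z c3 m3 by auto
      moreover have "z \<noteq> s 0" using True s0 disj by auto
      ultimately show ?thesis using z s0 by (simp add: Q_zero)
    qed simp
  qed (use s2 in auto)
  also have "A (s 0) (s 2) = ?Q $$ (s 0, s 1) * ?Q $$ (s 1, s 2)"
    unfolding A_def
  proof (rule trans[OF sum_single[of _ "s 1"]])
    fix y assume y: "y \<in> {..<n}" "y \<noteq> s 1"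
    show "(if y \<in> X2 \<and> s 0 \<in> X1 then ?Q $$ (s 0, y) else 0) * ?Q $$ (y, s 2) = 0"
    proof (cases "y \<in> X2")
      case True
      then have "y \<notin> S" using notS[of y X2 1] y c2 m3 by auto
      moreover have "y \<noteq> s 0" using True s0 disj by auto
      ultimately show ?thesis using y s0 by (simp add: Q_zero)
    qed simp
  qed (use s1 s0 in auto)
  finally show ?thesis using m3 by (simp add: Q_S)
qed

end



definition u4l :: "complex list list" where
  "u4l = [[Complex (1/2) 0, 0, Complex (-1/2) (-1/2), Complex (1/2) 0],
          [Complex (1/2) 0, Complex (1/2) 0, Complex 0 (1/2), Complex 0 (1/2)],
          [Complex (1/2) 0, Complex 0 (1/2), Complex (1/2) 0, Complex 0 (-1/2)],
          [Complex (1/2) 0, Complex (-1/2) (-1/2), 0, Complex (-1/2) 0]]"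

definition u4 :: "complex mat" where
  "u4 = mat 4 4 (\<lambda>(i,j). u4l ! i ! j)"

lemma sum4: "(\<Sum>k<4::nat. f k) = f 0 + f 1 + f 2 + (f 3 :: complex)"
  by (simp add: eval_nat_numeral)

lemma u4c: "u4 \<in> carrier_mat 4 4" by (simp add: u4_def)

lemma u4_idx: "i < 4 \<Longrightarrow> j < 4 \<Longrightarrow> u4 $$ (i,j) = u4l ! i ! j" by (simp add: u4_def)

lemma u4_unitary: "u4 \<in> unitary_group 4"
proof -
  have 1: "cadj u4 * u4 = 1\<^sub>m 4"
  proof (rule eq_matI)
    fix i j assume "i < dim_row (1\<^sub>m 4)" "j < dim_col (1\<^sub>m 4)"
    then have ij: "i < 4" "j < 4" by auto
    have "(cadj u4 * u4) $$ (i,j) = (\<Sum>k<4. cadj u4 $$ (i,k) * u4 $$ (k,j))"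
      by (rule mult_entry[of _ 4 4 _ 4]) (use ij u4c in auto)
    also have "\<dots> = (\<Sum>k<4. cnj (u4l ! k ! i) * (u4l ! k ! j))"
      using ij u4c by (intro sum.cong) (auto simp: u4_idx)
    finally have e: "(cadj u4 * u4) $$ (i,j) = (\<Sum>k<4. cnj (u4l ! k ! i) * (u4l ! k ! j))" .
    have "i \<in> {0,1,2,3}" "j \<in> {0,1,2,3}" using ij by auto
    then show "(cadj u4 * u4) $$ (i,j) = 1\<^sub>m 4 $$ (i,j)"
      unfolding e using ij by (auto simp: sum4 u4l_def complex_eq_iff)
  qed (use u4c in auto)
  have 2: "u4 * cadj u4 = 1\<^sub>m 4"
  proof (rule eq_matI)
    fix i j assume "i < dim_row (1\<^sub>m 4)" "j < dim_col (1\<^sub>m 4)"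
    then have ij: "i < 4" "j < 4" by auto
    have "(u4 * cadj u4) $$ (i,j) = (\<Sum>k<4. u4 $$ (i,k) * cadj u4 $$ (k,j))"
      by (rule mult_entry[of _ 4 4 _ 4]) (use ij u4c in auto)
    also have "\<dots> = (\<Sum>k<4. (u4l ! i ! k) * cnj (u4l ! j ! k))"
      using ij u4c by (intro sum.cong) (auto simp: u4_idx)
    finally have e: "(u4 * cadj u4) $$ (i,j) = (\<Sum>k<4. (u4l ! i ! k) * cnj (u4l ! j ! k))" .
    have "i \<in> {0,1,2,3}" "j \<in> {0,1,2,3}" using ij by auto
    then show "(u4 * cadj u4) $$ (i,j) = 1\<^sub>m 4 $$ (i,j)"
      unfolding e using ij by (auto simp: sum4 u4l_def complex_eq_iff)
  qed (use u4c in auto)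
  show ?thesis using u4c 1 2 by (auto simp: unitary_group_def)
qed


definition u5l :: "complex list list" where
  "u5l = [[Complex (-1/2) (-1/2), Complex (1/2) 0, 0, Complex (1/2) 0, 0],
          [Complex 0 (1/2), Complex 0 (1/2), 0, Complex (1/2) 0, Complex (1/2) 0],
          [Complex (1/2) 0, Complex 0 (-1/2), 0, Complex (1/2) 0, Complex 0 (1/2)],
          [0, Complex (-1/2) 0, 0, Complex (1/2) 0, Complex (-1/2) (-1/2)],
          [0, 0, 1, 0, 0]]"

definition u5 :: "complex mat" where
  "u5 = mat 5 5 (\<lambda>(i,j). u5l ! i ! j)"

lemma sum5: "(\<Sum>k<5::nat. f k) = f 0 + f 1 + f 2 + f 3 + (f 4 :: complex)"
  by (simp add: eval_nat_numeral)

lemma u5c: "u5 \<in> carrier_mat 5 5" by (simp add: u5_def)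

lemma u5_idx: "i < 5 \<Longrightarrow> j < 5 \<Longrightarrow> u5 $$ (i,j) = u5l ! i ! j" by (simp add: u5_def)

lemma u5_unitary: "u5 \<in> unitary_group 5"
proof -
  have 1: "cadj u5 * u5 = 1\<^sub>m 5"
  proof (rule eq_matI)
    fix i j assume "i < dim_row (1\<^sub>m 5)" "j < dim_col (1\<^sub>m 5)"
    then have ij: "i < 5" "j < 5" by auto
    have "(cadj u5 * u5) $$ (i,j) = (\<Sum>k<5. cadj u5 $$ (i,k) * u5 $$ (k,j))"
      by (rule mult_entry[of _ 5 5 _ 5]) (use ij u5c in auto)
    also have "\<dots> = (\<Sum>k<5. cnj (u5l ! k ! i) * (u5l ! k ! j))"
      using ij u5c by (intro sum.cong) (auto simp: u5_idx)
    finally have e: "(cadj u5 * u5) $$ (i,j) = (\<Sum>k<5. cnj (u5l ! k ! i) * (u5l ! k ! j))" .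
    have "i \<in> {0,1,2,3,4}" "j \<in> {0,1,2,3,4}" using ij by auto
    then show "(cadj u5 * u5) $$ (i,j) = 1\<^sub>m 5 $$ (i,j)"
      unfolding e using ij by (auto simp: sum5 u5l_def complex_eq_iff)
  qed (use u5c in auto)
  have 2: "u5 * cadj u5 = 1\<^sub>m 5"
  proof (rule eq_matI)
    fix i j assume "i < dim_row (1\<^sub>m 5)" "j < dim_col (1\<^sub>m 5)"
    then have ij: "i < 5" "j < 5" by auto
    have "(u5 * cadj u5) $$ (i,j) = (\<Sum>k<5. u5 $$ (i,k) * cadj u5 $$ (k,j))"
      by (rule mult_entry[of _ 5 5 _ 5]) (use ij u5c in auto)
    also have "\<dots> = (\<Sum>k<5. (u5l ! i ! k) * cnj (u5l ! j ! k))"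
      using ij u5c by (intro sum.cong) (auto simp: u5_idx)
    finally have e: "(u5 * cadj u5) $$ (i,j) = (\<Sum>k<5. (u5l ! i ! k) * cnj (u5l ! j ! k))" .
    have "i \<in> {0,1,2,3,4}" "j \<in> {0,1,2,3,4}" using ij by auto
    then show "(u5 * cadj u5) $$ (i,j) = 1\<^sub>m 5 $$ (i,j)"
      unfolding e using ij by (auto simp: sum5 u5l_def complex_eq_iff)
  qed (use u5c in auto)
  show ?thesis using u5c 1 2 by (auto simp: unitary_group_def)
qed

lemma P4_val:
  assumes "e 0 = 1" "e 1 = 1" "e 2 = 0" "e 3 = 0"
  shows "Im ((\<Sum>k<4. u4 $$ (0,k) * e k * cnj (u4 $$ (1,k))) * (\<Sum>k<4. u4 $$ (1,k) * e k * cnj (u4 $$ (2,k)))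
     * (\<Sum>k<4. u4 $$ (2,k) * e k * cnj (u4 $$ (0,k)))) \<noteq> 0"
  using assms by (simp add: sum4 u4_idx u4l_def)

lemma P5_val_b:
  assumes "e 0 = 0" "e 1 = 0" "e 2 = 0" "e 3 = 1" "e 4 = 1"
  shows "Im ((\<Sum>k<5. u5 $$ (0,k) * e k * cnj (u5 $$ (1,k))) * (\<Sum>k<5. u5 $$ (1,k) * e k * cnj (u5 $$ (2,k)))
     * (\<Sum>k<5. u5 $$ (2,k) * e k * cnj (u5 $$ (0,k)))) \<noteq> 0"
  using assms by (simp add: sum5 u5_idx u5l_def)

lemma P5_val_c:
  assumes "e 0 = 1" "e 1 = 1" "e 2 = 1" "e 3 = 0" "e 4 = 0"
  shows "Im ((\<Sum>k<5. u5 $$ (0,k) * e k * cnj (u5 $$ (1,k))) * (\<Sum>k<5. u5 $$ (1,k) * e k * cnj (u5 $$ (2,k)))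
     * (\<Sum>k<5. u5 $$ (2,k) * e k * cnj (u5 $$ (0,k)))) \<noteq> 0"
  using assms by (simp add: sum5 u5_idx u5l_def)


lemma bridge:
  assumes inj: "inj_on s {..<m}" and sn: "\<And>i. i < m \<Longrightarrow> s i < n" and uu: "u \<in> unitary_group m"
    and m3: "3 \<le> m"
    and disj: "X1 \<inter> X2 = {}" "X2 \<inter> X3 = {}" "X1 \<inter> X3 = {}"
    and cls: "\<And>i. i < m \<Longrightarrow> (s i \<in> X1 \<longleftrightarrow> i = 0) \<and> (s i \<in> X2 \<longleftrightarrow> i = 1) \<and> (s i \<in> X3 \<longleftrightarrow> i = 2)"
    and im: "Im ((\<Sum>k<m. u $$ (0,k) * (if s k < p then 1 else 0) * cnj (u $$ (1,k)))
       * (\<Sum>k<m. u $$ (1,k) * (if s k < p then 1 else 0) * cnj (u $$ (2,k)))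
       * (\<Sum>k<m. u $$ (2,k) * (if s k < p then 1 else 0) * cnj (u $$ (0,k)))) \<noteq> 0"
  shows "\<exists>G\<in>unitary_group n. Im (tr (Dm n X1 * (G * Dm n {0..<p} * cadj G) * Dm n X2 * (G * Dm n {0..<p} * cadj G)
     * Dm n X3 * (G * Dm n {0..<p} * cadj G))) \<noteq> 0"
proof -
  interpret constr n m s u using inj sn uu by unfold_locales auto
  have "tr (Dm n X1 * Q p * Dm n X2 * Q p * Dm n X3 * Q p) = P p 0 1 * P p 1 2 * P p 2 0"
    by (rule trace_formula[OF m3 disj cls])
  then have eq: "tr (Dm n X1 * (G * Dm n {0..<p} * cadj G) * Dm n X2 * (G * Dm n {0..<p} * cadj G)
     * Dm n X3 * (G * Dm n {0..<p} * cadj G)) = (\<Sum>k<m. u $$ (0,k) * (if s k < p then 1 else 0) * cnj (u $$ (1,k)))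
       * (\<Sum>k<m. u $$ (1,k) * (if s k < p then 1 else 0) * cnj (u $$ (2,k)))
       * (\<Sum>k<m. u $$ (2,k) * (if s k < p then 1 else 0) * cnj (u $$ (0,k)))"
    unfolding Q_def P_def .
  show ?thesis
  proof (rule bexI[OF _ G_unitary])
    show "Im (tr (Dm n X1 * (G * Dm n {0..<p} * cadj G) * Dm n X2 * (G * Dm n {0..<p} * cadj G)
     * Dm n X3 * (G * Dm n {0..<p} * cadj G))) \<noteq> 0" unfolding eq by (rule im)
  qed
qed

lemma off_mono: "i \<le> j \<Longrightarrow> off ns i \<le> off ns j"
proof -
  assume ij: "i \<le> j"
  have "off (take j ns) i \<le> sum_list (take j ns)" by (rule off_le)
  moreover have "off (take j ns) i = off ns i" using ij by (simp add: off_def min_def)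
  ultimately show ?thesis by (simp add: off_def)
qed

lemma off_len: "off ns (length ns) = sum_list ns" by (simp add: off_def)


lemma nth_less_bound: "(\<forall>x\<in>set xs. x < n) \<Longrightarrow> i < length xs \<Longrightarrow> xs ! i < (n::nat)"
  by auto

lemma cases4: "(i::nat) < 4 \<Longrightarrow> P 0 \<Longrightarrow> P 1 \<Longrightarrow> P 2 \<Longrightarrow> P 3 \<Longrightarrow> P i"
  by (auto simp: less_Suc_eq eval_nat_numeral)

lemma cases5: "(i::nat) < 5 \<Longrightarrow> P 0 \<Longrightarrow> P 1 \<Longrightarrow> P 2 \<Longrightarrow> P 3 \<Longrightarrow> P 4 \<Longrightarrow> P i"
  by (auto simp: less_Suc_eq eval_nat_numeral)

lemma blk_eq: "blk ns i = {off ns i..<off ns (Suc i)}" if "i < length ns"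
  using that by (simp add: blk_def off_Suc)

lemma key:
  fixes ns :: "nat list" and n p q :: nat
  assumes pos: "\<forall>i < length ns. ns ! i > 0"
    and sn: "sum_list ns = n"
    and "p > 0" and "q > 0" and pq: "p + q = n"
    and mn: "min p q \<ge> 3"
    and len: "length ns \<ge> 4"
  shows "\<exists>i1 i2 i3. i1 < length ns \<and> i2 < length ns \<and> i3 < length ns \<and>
    (\<exists>G\<in>unitary_group n. Im (tr (Dm n (blk ns i1) * (G * Dm n {0..<p} * cadj G) * Dm n (blk ns i2) * (G * Dm n {0..<p} * cadj G)
     * Dm n (blk ns i3) * (G * Dm n {0..<p} * cadj G))) \<noteq> 0)"
proof -
  define K where "K = length ns - 1"
  have K3: "3 \<le> K" and SK: "Suc K = length ns" using len by (auto simp: K_def)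
  define a1 where "a1 = off ns 1"
  define a2 where "a2 = off ns 2"
  define a3 where "a3 = off ns 3"
  define a4 where "a4 = off ns 4"
  define b where "b = off ns (K - 1)"
  define c where "c = off ns K"
  have o1: "off ns 1 = a1" and o2: "off ns 2 = a2" and o3: "off ns 3 = a3" and o4: "off ns 4 = a4"
    and oSK1: "off ns (Suc (K - 1)) = c" and oK: "off ns K = c" and oK1: "off ns (K - 1) = b"
    and oSK: "off ns (Suc K) = n"
    using K3 SK sn off_len[of ns] by (auto simp: a1_def a2_def a3_def a4_def b_def c_def)
  have a1v: "a1 = ns ! 0"
  proof -
    have "ns \<noteq> []" using len by auto
    then show ?thesis unfolding a1_def using off_Suc[of 0 ns] by simp
  qed
  have p0: "ns ! 0 > 0" "ns ! 1 > 0" "ns ! 2 > 0" "ns ! 3 > 0" "ns ! K > 0" "ns ! (K - 1) > 0"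
  proof -
    have "0 < length ns" "1 < length ns" "2 < length ns" "3 < length ns" "K < length ns" "K - 1 < length ns"
      using len K3 SK by auto
    then show "ns ! 0 > 0" "ns ! 1 > 0" "ns ! 2 > 0" "ns ! 3 > 0" "ns ! K > 0" "ns ! (K - 1) > 0"
      using pos by blast+
  qed
  have r1: "a2 = a1 + ns ! 1" using off_Suc[of 1 ns] len o1 o2 by (simp add: numeral_2_eq_2)
  have r2: "a3 = a2 + ns ! 2" using off_Suc[of 2 ns] len o2 o3 by (simp add: numeral_3_eq_3 numeral_2_eq_2)
  have r3: "a4 = a3 + ns ! 3" using off_Suc[of 3 ns] len o3 o4 by (simp add: eval_nat_numeral)
  have r4: "c = b + ns ! (K - 1)" using off_Suc[of "K - 1" ns] K3 SK oSK1 oK1 by simp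
  have r5: "n = c + ns ! K" using off_Suc[of K ns] SK oSK oK by simp
  have m1: "a2 \<le> b" unfolding a2_def b_def using K3 by (intro off_mono) simp
  have m2: "a3 \<le> c" unfolding a3_def c_def using K3 by (intro off_mono) simp
  have m3: "a4 \<le> n" using off_mono[of 4 "Suc K" ns] K3 o4 oSK by simp
  have L: "0 < length ns" "1 < length ns" "2 < length ns" "3 < length ns" "ns \<noteq> []" using len by auto
  have B0: "blk ns 0 = {0..<a1}" using blk_eq[of 0 ns] L o1 by simp
  have B1: "blk ns 1 = {a1..<a2}" using blk_eq[of 1 ns] L o1 o2 by (simp add: numeral_2_eq_2)
  have B1': "blk ns (Suc 0) = {a1..<a2}" using B1 by simp
  have B2: "blk ns 2 = {a2..<a3}" using blk_eq[of 2 ns] L o2 o3 by (simp add: eval_nat_numeral)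
  have B3: "blk ns 3 = {a3..<a4}" using blk_eq[of 3 ns] L o3 o4 by (simp add: eval_nat_numeral)
  have BK: "blk ns K = {c..<n}" using blk_eq[of K ns] SK oK oSK by simp
  have p3: "3 \<le> p" "3 \<le> q" using mn by auto
  have iq: "1 \<le> a1" "a1 + 1 \<le> a2" "a2 + 1 \<le> a3" "a3 + 1 \<le> a4" "a4 \<le> n" "a2 \<le> b" "b + 1 \<le> c"
    "c + 1 \<le> n" "a3 \<le> c"
    using a1v p0 r1 r2 r3 r4 r5 m1 m2 m3 by linarith+
  consider (a) "a1 < p" "p < c" | (b) "p \<le> a1" | (c) "a1 < p" "c \<le> p" by linarith
  then show ?thesis
  proof cases
    case a
    define xs where "xs = [0, a1, n - 1, c - 1]"
    have ex: "\<exists>G\<in>unitary_group n. Im (tr (Dm n (blk ns 0) * (G * Dm n {0..<p} * cadj G) * Dm n (blk ns 1) * (G * Dm n {0..<p} * cadj G)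
     * Dm n (blk ns K) * (G * Dm n {0..<p} * cadj G))) \<noteq> 0"
    proof (rule bridge[where s = "\<lambda>i. xs ! i" and m = 4 and u = u4])
      show "inj_on (\<lambda>i. xs ! i) {..<4}"
        by (rule inj_on_nth) (use a iq p3 pq in \<open>auto simp: xs_def\<close>)
      show "xs ! i < n" if "i < 4" for i
        by (rule nth_less_bound) (use that a iq p3 pq in \<open>auto simp: xs_def\<close>)
      show "u4 \<in> unitary_group 4" by (rule u4_unitary)
      show "blk ns 0 \<inter> blk ns 1 = {}" "blk ns 1 \<inter> blk ns K = {}" "blk ns 0 \<inter> blk ns K = {}"
        using a iq by (auto simp: B0 B1 B1' BK)
      show "(xs ! i \<in> blk ns 0 \<longleftrightarrow> i = 0) \<and> (xs ! i \<in> blk ns 1 \<longleftrightarrow> i = 1) \<and> (xs ! i \<in> blk ns K \<longleftrightarrow> i = 2)"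
        if "i < 4" for i
        using that by (rule cases4) (use a iq p3 pq in \<open>auto simp: xs_def B0 B1 B1' BK\<close>)
      show "Im ((\<Sum>k<4. u4 $$ (0,k) * (if xs ! k < p then 1 else 0) * cnj (u4 $$ (1,k)))
       * (\<Sum>k<4. u4 $$ (1,k) * (if xs ! k < p then 1 else 0) * cnj (u4 $$ (2,k)))
       * (\<Sum>k<4. u4 $$ (2,k) * (if xs ! k < p then 1 else 0) * cnj (u4 $$ (0,k)))) \<noteq> 0"
        by (rule P4_val) (use a iq p3 pq in \<open>auto simp: xs_def\<close>)
    qed simp
    show ?thesis using ex K3 SK by (intro exI[of _ 0] exI[of _ 1] exI[of _ K]) auto
  next
    case b
    define xs where "xs = [a1, a2, a3, 0, 1]"
    have ex: "\<exists>G\<in>unitary_group n. Im (tr (Dm n (blk ns 1) * (G * Dm n {0..<p} * cadj G) * Dm n (blk ns 2) * (G * Dm n {0..<p} * cadj G)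
     * Dm n (blk ns 3) * (G * Dm n {0..<p} * cadj G))) \<noteq> 0"
    proof (rule bridge[where s = "\<lambda>i. xs ! i" and m = 5 and u = u5])
      show "inj_on (\<lambda>i. xs ! i) {..<5}"
        by (rule inj_on_nth) (use b iq p3 pq in \<open>auto simp: xs_def\<close>)
      show "xs ! i < n" if "i < 5" for i
        by (rule nth_less_bound) (use that b iq p3 pq in \<open>auto simp: xs_def\<close>)
      show "u5 \<in> unitary_group 5" by (rule u5_unitary)
      show "blk ns 1 \<inter> blk ns 2 = {}" "blk ns 2 \<inter> blk ns 3 = {}" "blk ns 1 \<inter> blk ns 3 = {}"
        using b iq by (auto simp: B1 B1' B2 B3)
      show "(xs ! i \<in> blk ns 1 \<longleftrightarrow> i = 0) \<and> (xs ! i \<in> blk ns 2 \<longleftrightarrow> i = 1) \<and> (xs ! i \<in> blk ns 3 \<longleftrightarrow> i = 2)"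
        if "i < 5" for i
        using that by (rule cases5) (use b iq p3 pq in \<open>auto simp: xs_def B1 B1' B2 B3\<close>)
      show "Im ((\<Sum>k<5. u5 $$ (0,k) * (if xs ! k < p then 1 else 0) * cnj (u5 $$ (1,k)))
       * (\<Sum>k<5. u5 $$ (1,k) * (if xs ! k < p then 1 else 0) * cnj (u5 $$ (2,k)))
       * (\<Sum>k<5. u5 $$ (2,k) * (if xs ! k < p then 1 else 0) * cnj (u5 $$ (0,k)))) \<noteq> 0"
        by (rule P5_val_b) (use b iq p3 pq in \<open>auto simp: xs_def\<close>)
    qed simp
    show ?thesis using ex K3 SK by (intro exI[of _ 1] exI[of _ 2] exI[of _ 3]) auto
  next
    case c
    define xs where "xs = [0, a1, a2, n - 2, n - 1]"
    have ex: "\<exists>G\<in>unitary_group n. Im (tr (Dm n (blk ns 0) * (G * Dm n {0..<p} * cadj G) * Dm n (blk ns 1) * (G * Dm n {0..<p} * cadj G)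
     * Dm n (blk ns 2) * (G * Dm n {0..<p} * cadj G))) \<noteq> 0"
    proof (rule bridge[where s = "\<lambda>i. xs ! i" and m = 5 and u = u5])
      show "inj_on (\<lambda>i. xs ! i) {..<5}"
        by (rule inj_on_nth) (use c iq p3 pq in \<open>auto simp: xs_def\<close>)
      show "xs ! i < n" if "i < 5" for i
        by (rule nth_less_bound) (use that c iq p3 pq in \<open>auto simp: xs_def\<close>)
      show "u5 \<in> unitary_group 5" by (rule u5_unitary)
      show "blk ns 0 \<inter> blk ns 1 = {}" "blk ns 1 \<inter> blk ns 2 = {}" "blk ns 0 \<inter> blk ns 2 = {}"
        using c iq by (auto simp: B0 B1 B1' B2)
      show "(xs ! i \<in> blk ns 0 \<longleftrightarrow> i = 0) \<and> (xs ! i \<in> blk ns 1 \<longleftrightarrow> i = 1) \<and> (xs ! i \<in> blk ns 2 \<longleftrightarrow> i = 2)"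
        if "i < 5" for i
        using that by (rule cases5) (use c iq p3 pq in \<open>auto simp: xs_def B0 B1 B1' B2\<close>)
      show "Im ((\<Sum>k<5. u5 $$ (0,k) * (if xs ! k < p then 1 else 0) * cnj (u5 $$ (1,k)))
       * (\<Sum>k<5. u5 $$ (1,k) * (if xs ! k < p then 1 else 0) * cnj (u5 $$ (2,k)))
       * (\<Sum>k<5. u5 $$ (2,k) * (if xs ! k < p then 1 else 0) * cnj (u5 $$ (0,k)))) \<noteq> 0"
        by (rule P5_val_c) (use c iq p3 pq in \<open>auto simp: xs_def\<close>)
    qed simp
    show ?thesis using ex K3 SK by (intro exI[of _ 0] exI[of _ 1] exI[of _ 2]) auto
  qed
qed


theorem proposition6p7:
  fixes ns :: "nat list" and n p q :: nat
  assumes "\<forall>i < length ns. ns ! i > 0"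
    and "sum_list ns = n"
    and "p > 0" and "q > 0" and "p + q = n"
    and "min p q \<ge> 3"
    and "length ns \<ge> 4"
  shows "triple_prod (block_unitary_group ns) (orthogonal_group n) (block_unitary_group [p, q])
           \<subset> unitary_group n"
proof -
  have sub: "triple_prod (block_unitary_group ns) (orthogonal_group n) (block_unitary_group [p, q]) \<subseteq> unitary_group n"
  proof
    fix g assume "g \<in> triple_prod (block_unitary_group ns) (orthogonal_group n) (block_unitary_group [p, q])"
    then obtain a b c where g: "g = a * b * c" and a: "a \<in> block_unitary_group ns"
      and b: "b \<in> orthogonal_group n" and c: "c \<in> block_unitary_group [p, q]"
      by (auto simp: triple_prod_def)
    have "a \<in> unitary_group n" using a block_unitary_subset assms(2) by auto
    moreover have "b \<in> unitary_group n" using b orth_subset by auto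
    moreover have "c \<in> unitary_group n" using c block_unitary_subset[of "[p, q]"] assms(5) by auto
    ultimately show "g \<in> unitary_group n" unfolding g by (intro unitary_mult)
  qed
  obtain i1 i2 i3 G where i: "i1 < length ns" "i2 < length ns" "i3 < length ns" and G: "G \<in> unitary_group n"
    and im: "Im (tr (Dm n (blk ns i1) * (G * Dm n {0..<p} * cadj G) * Dm n (blk ns i2) * (G * Dm n {0..<p} * cadj G)
     * Dm n (blk ns i3) * (G * Dm n {0..<p} * cadj G))) \<noteq> 0"
    using key[OF assms] by blast
  have "G \<notin> triple_prod (block_unitary_group ns) (orthogonal_group n) (block_unitary_group [p, q])"
    using part1[OF assms(2) assms(5) i] im by blast
  then show ?thesis using sub G by blast
qed

end
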